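(* Let $m,n\in\mathbb{N}$, $g\in\mathcal{H}(\mathbb{D})$, and let $L_g$ be a $g$-operator satisfying \[L_g=L_0+\sum_{j=1}^mL_j\quad\text{on }\mathcal{H}_0(\mathbb{D}),\] where $L_0\in W_g(m,n)$ and $L_j\in\operatorname{span}W_g(m-j,n+j)$ for $j=1,\dots,m$. For $j=0,\dots,m$ let $q_j=\big[\frac{m-j}{n+j}\big]$ and $d_j=m-j-(n+j)q_j$ (quotient and remainder of the division of $m-j$ by $n+j$), and define \[\mathcal{L}_{m,n,j}:=\big(S_g^{q_j+1}T_g\big)^{d_j}\big(S_g^{q_j}T_g\big)^{n+j-d_j}.\] Then $L_g=\mathcal{L}_{m,n,0}+\sum_{j=1}^ma_j\mathcal{L}_{m,n,j}$ on $\mathcal{H}_0(\mathbb{D})$, for some $a_1,\dots,a_m\in\mathbb{C}$. In particular, when $n$ divides $m$, we have $q_0\in\mathbb{N}$, $q_j<q_0$ for $j=1,\dots,m$, and \[L_g=(S_g^{q_0}T_g)^n+\sum_{\substack{1\le j\le m\\ q_j=q_0-1}}c_j\mathcal{L}_{m,n,j}+\sum_{\substack{1\le j\le m\\ q_j<q_0-1}}c_j\mathcal{L}_{m,n,j}\quad\text{on }\mathcal{H}_0(\mathbb{D})\] for some $c_j\in\mathbb{C}$. Moreover, if $n$ divides $m$ and $q_j=q_0-1$ for some $j\in\{1,\dots,m\}$, then $0\le d_j=n-jq_0<n$.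
   Context: $\mathbb{D}$ is the open unit disc, $\mathcal{H}(\mathbb{D})$ the analytic functions on $\mathbb{D}$, $\mathcal{H}_0(\mathbb{D})=\{f\in\mathcal{H}(\mathbb{D}):f(0)=0\}$. For $g\in\mathcal{H}(\mathbb{D})$: $M_gf=fg$, $S_gf(z)=\int_0^zf'(\zeta)g(\zeta)d\zeta$, $T_gf(z)=\int_0^zf(\zeta)g'(\zeta)d\zeta$; powers denote compositions, with zeroth power the identity. A $g$-operator is a finite linear combination (constant coefficients) of finite compositions of $M_g,S_g,T_g$. For $a,b\in\mathbb{N}_0=\mathbb{N}\cup\{0\}$, $W_g(a,b)$ is the set of compositions $L_1\cdots L_{a+b}$ with each $L_j\in\{S_g,T_g\}$, exactly $a$ equal to $S_g$ and $b$ equal to $T_g$; $\operatorname{span}$ is the complex linear span. "$=$ on $\mathcal{H}_0(\mathbb{D})$" means equality of restrictions to $\mathcal{H}_0(\mathbb{D})$. *)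

theory Defs
  imports "HOL-Complex_Analysis.Complex_Analysis"
begin

type_synonym cfun = "complex \<Rightarrow> complex"
type_synonym cop = "cfun \<Rightarrow> cfun"

definition Mop :: "cfun \<Rightarrow> cop" where
  "Mop g f = (\<lambda>z. f z * g z)"
definition Sop :: "cfun \<Rightarrow> cop" where
  "Sop g f = (\<lambda>z. contour_integral (linepath 0 z) (\<lambda>\<zeta>. deriv f \<zeta> * g \<zeta>))"
definition Top :: "cfun \<Rightarrow> cop" where
  "Top g f = (\<lambda>z. contour_integral (linepath 0 z) (\<lambda>\<zeta>. f \<zeta> * deriv g \<zeta>))"

datatype letter = LM | LS | LT

fun letter_op :: "cfun \<Rightarrow> letter \<Rightarrow> cop" where
  "letter_op g LM = Mop g"
| "letter_op g LS = Sop g"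
| "letter_op g LT = Top g"

definition word_op :: "cfun \<Rightarrow> letter list \<Rightarrow> cop" where
  "word_op g w = foldr (\<lambda>l A. letter_op g l \<circ> A) w id"

definition opspan :: "cop set \<Rightarrow> cop set" where
  "opspan A = {L. \<exists>cs :: (complex \<times> cop) list. set (map snd cs) \<subseteq> A \<and>
       L = (\<lambda>f z. sum_list (map (\<lambda>(c, K). c * K f z) cs))}"

definition g_operator :: "cfun \<Rightarrow> cop \<Rightarrow> bool" where
  "g_operator g L \<longleftrightarrow> L \<in> opspan {word_op g w | w. True}"

definition Wg :: "cfun \<Rightarrow> nat \<Rightarrow> nat \<Rightarrow> cop set" where
  "Wg g a b = {word_op g w | w. set w \<subseteq> {LS, LT} \<and> count_list w LS = a \<and> count_list w LT = b}"

definition eq_on_H0 :: "cop \<Rightarrow> cop \<Rightarrow> bool" where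
  "eq_on_H0 A B \<longleftrightarrow> (\<forall>f. f holomorphic_on ball 0 1 \<and> f 0 = 0 \<longrightarrow>
       (\<forall>z\<in>ball 0 1. A f z = B f z))"

definition qq :: "nat \<Rightarrow> nat \<Rightarrow> nat \<Rightarrow> nat" where
  "qq m n j = (m - j) div (n + j)"
definition dd :: "nat \<Rightarrow> nat \<Rightarrow> nat \<Rightarrow> nat" where
  "dd m n j = (m - j) mod (n + j)"

definition calL :: "cfun \<Rightarrow> nat \<Rightarrow> nat \<Rightarrow> nat \<Rightarrow> cop" where
  "calL g m n j = (((Sop g ^^ (qq m n j + 1)) \<circ> Top g) ^^ dd m n j) \<circ>
                  (((Sop g ^^ qq m n j) \<circ> Top g) ^^ (n + j - dd m n j))"

end

theory Submission
  imports Defs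
begin


abbreviation BB :: "complex set" where "BB \<equiv> ball 0 1"

lemma seg_ball: "z \<in> BB \<Longrightarrow> closed_segment 0 z \<subseteq> BB"
  by (simp add: closed_segment_subset convex_ball)

lemma prim_deriv:
  assumes h: "h holomorphic_on BB" and z: "z \<in> BB"
  shows "((\<lambda>z. contour_integral (linepath 0 z) h) has_field_derivative h z) (at z)"
proof -
  obtain G where G: "\<And>x. x \<in> BB \<Longrightarrow> (G has_field_derivative h x) (at x within BB)"
    using holomorphic_convex_primitive'[OF convex_ball open_ball h] by blast
  have G': "(G has_field_derivative h x) (at x)" if "x \<in> BB" for x
    using G[OF that] at_within_open[OF that open_ball] by simp
  have eq: "G w - G 0 = contour_integral (linepath 0 w) h" if "w \<in> BB" for w
  proof -
    have "(h has_contour_integral (G (pathfinish (linepath 0 w)) - G (pathstart (linepath 0 w)))) (linepath 0 w)"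
      by (rule contour_integral_primitive[OF G]) (use seg_ball[OF that] in auto)
    then show ?thesis by (simp add: contour_integral_unique)
  qed
  have "((\<lambda>w. G w - G 0) has_field_derivative h z) (at z)" using G'[OF z] by (auto intro!: derivative_eq_intros)
  then show ?thesis
    by (rule has_field_derivative_transform_within_open[where S=BB]) (use z eq in auto)
qed

lemma prim_cong:
  assumes "\<And>w. w \<in> BB \<Longrightarrow> h1 w = h2 w" "z \<in> BB"
  shows "contour_integral (linepath 0 z) h1 = contour_integral (linepath 0 z) h2"
  by (rule contour_integral_eq) (use assms seg_ball[OF assms(2)] in auto)

lemma uniq:
  assumes F: "\<And>w. w \<in> BB \<Longrightarrow> (F has_field_derivative Da w) (at w)"
    and G: "\<And>w. w \<in> BB \<Longrightarrow> (G has_field_derivative Db w) (at w)"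
    and D: "\<And>w. w \<in> BB \<Longrightarrow> Da w = Db w" and z0: "F 0 = G 0" and z: "z \<in> BB"
  shows "F z = G z"
proof -
  have "\<exists>c. \<forall>x\<in>BB. F x - G x = c"
  proof (rule has_field_derivative_zero_constant[OF convex_ball])
    fix x assume x: "x \<in> BB"
    have "((\<lambda>x. F x - G x) has_field_derivative Da x - Db x) (at x)"
      using F[OF x] G[OF x] by (auto intro!: derivative_eq_intros)
    then show "((\<lambda>x. F x - G x) has_field_derivative 0) (at x within BB)"
      using D[OF x] by (simp add: has_field_derivative_at_within)
  qed
  then obtain c where "\<forall>x\<in>BB. F x - G x = c" by blast
  then have "F z - G z = F 0 - G 0" using z by auto
  then show ?thesis using z0 by simp
qed

lemma hol_deriv_at: "f holomorphic_on BB \<Longrightarrow> w \<in> BB \<Longrightarrow> (f has_field_derivative deriv f w) (at w)"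
  using holomorphic_derivI[OF _ open_ball] by blast

definition goodop :: "cop \<Rightarrow> bool" where
  "goodop P \<longleftrightarrow> (\<forall>f. f holomorphic_on BB \<longrightarrow> P f holomorphic_on BB \<and> P f 0 = 0)
     \<and> (\<forall>f1 f2. (\<forall>w\<in>BB. f1 w = f2 w) \<longrightarrow> (\<forall>z\<in>BB. P f1 z = P f2 z))
     \<and> (\<forall>F1 F2. F1 holomorphic_on BB \<longrightarrow> F2 holomorphic_on BB \<longrightarrow>
           (\<forall>z\<in>BB. P (\<lambda>w. F1 w + F2 w) z = P F1 z + P F2 z))
     \<and> (\<forall>(I::nat set) c F. finite I \<longrightarrow> (\<forall>i\<in>I. F i holomorphic_on BB) \<longrightarrow>
           (\<forall>z\<in>BB. P (\<lambda>w. \<Sum>i\<in>I. c i * F i w) z = (\<Sum>i\<in>I. c i * P (F i) z)))"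

lemma goodop_hol: "goodop P \<Longrightarrow> f holomorphic_on BB \<Longrightarrow> P f holomorphic_on BB"
  unfolding goodop_def by simp
lemma goodop_0: "goodop P \<Longrightarrow> f holomorphic_on BB \<Longrightarrow> P f 0 = 0"
  unfolding goodop_def by simp
lemma goodop_cong: "goodop P \<Longrightarrow> (\<And>w. w \<in> BB \<Longrightarrow> f1 w = f2 w) \<Longrightarrow> z \<in> BB \<Longrightarrow> P f1 z = P f2 z"
  unfolding goodop_def by simp
lemma goodop_add: "goodop P \<Longrightarrow> F1 holomorphic_on BB \<Longrightarrow> F2 holomorphic_on BB \<Longrightarrow> z \<in> BB \<Longrightarrow>
   P (\<lambda>w. F1 w + F2 w) z = P F1 z + P F2 z"
  unfolding goodop_def by simp
lemma goodop_sum: "goodop P \<Longrightarrow> finite (I::nat set) \<Longrightarrow> (\<And>i. i \<in> I \<Longrightarrow> F i holomorphic_on BB) \<Longrightarrow> z \<in> BB \<Longrightarrow>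
   P (\<lambda>w. \<Sum>i\<in>I. c i * F i w) z = (\<Sum>i\<in>I. c i * P (F i) z)"
  unfolding goodop_def by simp

lemma goodop_generic:
  fixes K :: "cfun \<Rightarrow> cfun"
  assumes P: "\<And>f. P f = (\<lambda>z. contour_integral (linepath 0 z) (K f))"
    and Khol: "\<And>f. f holomorphic_on BB \<Longrightarrow> K f holomorphic_on BB"
    and Kcong: "\<And>f1 f2 w. (\<forall>w\<in>BB. f1 w = f2 w) \<Longrightarrow> w \<in> BB \<Longrightarrow> K f1 w = K f2 w"
    and Kadd: "\<And>F1 F2 w. F1 holomorphic_on BB \<Longrightarrow> F2 holomorphic_on BB \<Longrightarrow> w \<in> BB \<Longrightarrow>
        K (\<lambda>w. F1 w + F2 w) w = K F1 w + K F2 w"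
    and Ksum: "\<And>(I::nat set) c F w. finite I \<Longrightarrow> (\<forall>i\<in>I. F i holomorphic_on BB) \<Longrightarrow> w \<in> BB \<Longrightarrow>
        K (\<lambda>w. \<Sum>i\<in>I. c i * F i w) w = (\<Sum>i\<in>I. c i * K (F i) w)"
  shows "goodop P"
  unfolding goodop_def
proof (intro conjI allI impI ballI)
  fix f :: cfun assume f: "f holomorphic_on BB"
  show "P f holomorphic_on BB"
    unfolding P holomorphic_on_def
    using prim_deriv[OF Khol[OF f]] field_differentiable_def field_differentiable_at_within by blast
  show "P f 0 = 0" by (simp add: P)
next
  fix f1 f2 :: cfun and z assume "\<forall>w\<in>BB. f1 w = f2 w" "z \<in> BB"
  then show "P f1 z = P f2 z" unfolding P using prim_cong Kcong by metis
next
  fix F1 F2 :: cfun and z assume F: "F1 holomorphic_on BB" "F2 holomorphic_on BB" and z: "z \<in> BB"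
  have i1: "K F1 contour_integrable_on linepath 0 z"
    by (rule contour_integrable_holomorphic_simple[OF Khol[OF F(1)] open_ball]) (use z seg_ball in auto)
  have i2: "K F2 contour_integrable_on linepath 0 z"
    by (rule contour_integrable_holomorphic_simple[OF Khol[OF F(2)] open_ball]) (use z seg_ball in auto)
  have "P (\<lambda>w. F1 w + F2 w) z = contour_integral (linepath 0 z) (\<lambda>w. K F1 w + K F2 w)"
    unfolding P by (rule prim_cong) (use Kadd F z in auto)
  also have "\<dots> = P F1 z + P F2 z" unfolding P using contour_integral_add[OF i1 i2] by simp
  finally show "P (\<lambda>w. F1 w + F2 w) z = P F1 z + P F2 z" .
next
  fix I :: "nat set" and c F z assume I: "finite I" and F: "\<forall>i\<in>I. F i holomorphic_on BB" and z: "z \<in> BB"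
  have ii: "(\<lambda>w. c i * K (F i) w) contour_integrable_on linepath 0 z" if "i \<in> I" for i
    by (rule contour_integrable_holomorphic_simple[where S=BB])
       (use z seg_ball Khol F that in \<open>auto intro!: holomorphic_intros\<close>)
  have "P (\<lambda>w. \<Sum>i\<in>I. c i * F i w) z = contour_integral (linepath 0 z) (\<lambda>w. \<Sum>i\<in>I. c i * K (F i) w)"
    unfolding P by (rule prim_cong) (use Ksum I F z in auto)
  also have "\<dots> = (\<Sum>i\<in>I. contour_integral (linepath 0 z) (\<lambda>w. c i * K (F i) w))"
    by (rule contour_integral_sum[OF I ii])
  also have "\<dots> = (\<Sum>i\<in>I. c i * P (F i) z)"
  proof (rule sum.cong)
    fix i assume "i \<in> I"
    have "K (F i) contour_integrable_on linepath 0 z"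
      by (rule contour_integrable_holomorphic_simple[OF Khol open_ball]) (use z seg_ball F \<open>i\<in>I\<close> in auto)
    then show "contour_integral (linepath 0 z) (\<lambda>w. c i * K (F i) w) = c i * P (F i) z"
      unfolding P by (rule contour_integral_lmul)
  qed simp
  finally show "P (\<lambda>w. \<Sum>i\<in>I. c i * F i w) z = (\<Sum>i\<in>I. c i * P (F i) z)" .
qed


lemma deriv_cong_ball: "(\<forall>w\<in>BB. f1 w = f2 w) \<Longrightarrow> w \<in> BB \<Longrightarrow> deriv f1 w = deriv f2 w"
proof (rule deriv_cong_ev)
  assume a: "\<forall>w\<in>BB. f1 w = f2 w" "w \<in> BB"
  have "eventually (\<lambda>x. x \<in> BB) (nhds w)" by (rule eventually_nhds_in_open) (use a in auto)
  then show "eventually (\<lambda>x. f1 x = f2 x) (nhds w)" by (rule eventually_mono) (use a in auto)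
qed simp

context
  fixes g :: cfun
  assumes g: "g holomorphic_on BB"
begin

lemma goodop_S: "goodop (Sop g)"
proof (rule goodop_generic[where K="\<lambda>f \<zeta>. deriv f \<zeta> * g \<zeta>"])
  show "\<And>f. Sop g f = (\<lambda>z. contour_integral (linepath 0 z) (\<lambda>\<zeta>. deriv f \<zeta> * g \<zeta>))"
    by (simp add: Sop_def)
  show "(\<lambda>\<zeta>. deriv f \<zeta> * g \<zeta>) holomorphic_on BB" if "f holomorphic_on BB" for f
    using holomorphic_deriv[OF that open_ball] g by (auto intro!: holomorphic_intros)
  show "deriv f1 w * g w = deriv f2 w * g w" if "\<forall>w\<in>BB. f1 w = f2 w" "w \<in> BB" for f1 f2 w
    using deriv_cong_ball[OF that] by simp
  show "deriv (\<lambda>w. F1 w + F2 w) w * g w = deriv F1 w * g w + deriv F2 w * g w"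
    if "F1 holomorphic_on BB" "F2 holomorphic_on BB" "w \<in> BB" for F1 F2 w
  proof -
    have "((\<lambda>w. F1 w + F2 w) has_field_derivative deriv F1 w + deriv F2 w) (at w)"
      using hol_deriv_at[OF that(1,3)] hol_deriv_at[OF that(2,3)] by (auto intro!: derivative_eq_intros)
    then show ?thesis by (simp add: DERIV_imp_deriv distrib_right)
  qed
  show "deriv (\<lambda>w. \<Sum>i\<in>I. c i * F i w) w * g w = (\<Sum>i\<in>I. c i * (deriv (F i) w * g w))"
    if "finite I" "\<forall>i\<in>I. F i holomorphic_on BB" "w \<in> BB" for I :: "nat set" and c F w
  proof -
    have "((\<lambda>w. \<Sum>i\<in>I. c i * F i w) has_field_derivative (\<Sum>i\<in>I. c i * deriv (F i) w)) (at w)"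
      by (intro DERIV_sum DERIV_cmult hol_deriv_at) (use that in auto)
    then show ?thesis by (simp add: DERIV_imp_deriv sum_distrib_right mult.assoc)
  qed
qed

lemma goodop_T: "goodop (Top g)"
proof (rule goodop_generic[where K="\<lambda>f \<zeta>. f \<zeta> * deriv g \<zeta>"])
  show "\<And>f. Top g f = (\<lambda>z. contour_integral (linepath 0 z) (\<lambda>\<zeta>. f \<zeta> * deriv g \<zeta>))"
    by (simp add: Top_def)
  show "(\<lambda>\<zeta>. f \<zeta> * deriv g \<zeta>) holomorphic_on BB" if "f holomorphic_on BB" for f
    using holomorphic_deriv[OF g open_ball] that by (auto intro!: holomorphic_intros)
  show "f1 w * deriv g w = f2 w * deriv g w" if "\<forall>w\<in>BB. f1 w = f2 w" "w \<in> BB" for f1 f2 w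
    using that by simp
  show "(F1 w + F2 w) * deriv g w = F1 w * deriv g w + F2 w * deriv g w" for F1 F2 w
    by (simp add: distrib_right)
  show "(\<Sum>i\<in>I. c i * F i w) * deriv g w = (\<Sum>i\<in>I. c i * (F i w * deriv g w))" for I :: "nat set" and c F w
    by (simp add: sum_distrib_right mult.assoc)
qed

lemma S_der: "f holomorphic_on BB \<Longrightarrow> z \<in> BB \<Longrightarrow> (Sop g f has_field_derivative deriv f z * g z) (at z)"
  unfolding Sop_def
  by (rule prim_deriv[OF holomorphic_on_mult[OF holomorphic_deriv[OF _ open_ball] g]])

lemma T_der: "f holomorphic_on BB \<Longrightarrow> z \<in> BB \<Longrightarrow> (Top g f has_field_derivative f z * deriv g z) (at z)"
  unfolding Top_def
  by (rule prim_deriv[OF holomorphic_on_mult[OF _ holomorphic_deriv[OF g open_ball]]])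

lemma S_hol: "f holomorphic_on BB \<Longrightarrow> Sop g f holomorphic_on BB"
  by (rule goodop_hol[OF goodop_S])
lemma T_hol: "f holomorphic_on BB \<Longrightarrow> Top g f holomorphic_on BB"
  by (rule goodop_hol[OF goodop_T])
lemma S_0: "Sop g f 0 = 0" by (simp add: Sop_def)
lemma T_0: "Top g f 0 = 0" by (simp add: Top_def)

lemma key:
  assumes f: "f holomorphic_on BB" "f 0 = 0" and z: "z \<in> BB"
  shows "Top g (Sop g f) z = Sop g (Top g f) z - Top g (Top g f) z"
proof -
  have dg: "(g has_field_derivative deriv g w) (at w)" if "w \<in> BB" for w
    using hol_deriv_at[OF g that] .
  have ST: "Sop g f w + Top g f w = f w * g w" if w: "w \<in> BB" for w
  proof (rule uniq[where F="\<lambda>w. Sop g f w + Top g f w" and G="\<lambda>w. f w * g w"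
         and Da="\<lambda>x. deriv f x * g x + f x * deriv g x" and Db="\<lambda>x. deriv f x * g x + deriv g x * f x"])
    show "((\<lambda>w. Sop g f w + Top g f w) has_field_derivative deriv f x * g x + f x * deriv g x) (at x)"
      if "x \<in> BB" for x
      by (rule DERIV_add[OF S_der[OF f(1) that] T_der[OF f(1) that]])
    show "((\<lambda>w. f w * g w) has_field_derivative deriv f x * g x + deriv g x * f x) (at x)"
      if "x \<in> BB" for x
      by (rule DERIV_mult[OF hol_deriv_at[OF f(1) that] dg[OF that]])
    show "(\<lambda>w. Sop g f w + Top g f w) 0 = (\<lambda>w. f w * g w) 0"
      using f by (simp add: S_0 T_0)
  qed (use w in \<open>simp_all add: mult.commute\<close>)
  have "Top g (Sop g f) z + Top g (Top g f) z = Sop g (Top g f) z"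
  proof (rule uniq[where F="\<lambda>w. Top g (Sop g f) w + Top g (Top g f) w" and G="Sop g (Top g f)"
     and Da="\<lambda>x. Sop g f x * deriv g x + Top g f x * deriv g x" and Db="\<lambda>x. deriv (Top g f) x * g x"])
    show "((\<lambda>w. Top g (Sop g f) w + Top g (Top g f) w) has_field_derivative
            Sop g f x * deriv g x + Top g f x * deriv g x) (at x)" if "x \<in> BB" for x
      by (rule DERIV_add[OF T_der[OF S_hol[OF f(1)] that] T_der[OF T_hol[OF f(1)] that]])
    show "(Sop g (Top g f) has_field_derivative deriv (Top g f) x * g x) (at x)" if "x \<in> BB" for x
      using S_der[OF T_hol[OF f(1)] that] .
    show "Sop g f x * deriv g x + Top g f x * deriv g x = deriv (Top g f) x * g x" if "x \<in> BB" for x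
    proof -
      have "deriv (Top g f) x = f x * deriv g x" using T_der[OF f(1) that] by (rule DERIV_imp_deriv)
      then have "deriv (Top g f) x * g x = (f x * g x) * deriv g x" by simp
      also have "\<dots> = (Sop g f x + Top g f x) * deriv g x" using ST[OF that] by simp
      finally show ?thesis by (simp add: distrib_right)
    qed
    show "(\<lambda>w. Top g (Sop g f) w + Top g (Top g f) w) 0 = Sop g (Top g f) 0" by (simp add: S_0 T_0)
  qed (use z in simp)
  then show ?thesis by (simp add: algebra_simps)
qed

end




definition H0 :: "cfun \<Rightarrow> bool" where "H0 f \<longleftrightarrow> f holomorphic_on BB \<and> f 0 = 0"
definition NN :: "cfun \<Rightarrow> nat \<Rightarrow> nat \<Rightarrow> cop" where
  "NN g L i = (Sop g ^^ i) \<circ> (Top g ^^ (L - i))"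
definition low :: "cfun \<Rightarrow> nat \<Rightarrow> nat \<Rightarrow> cop \<Rightarrow> bool" where
  "low g L s A \<longleftrightarrow> (\<exists>c. eq_on_H0 A (\<lambda>f z. \<Sum>i<s. c i * NN g L i f z))"
definition lead :: "cfun \<Rightarrow> nat \<Rightarrow> nat \<Rightarrow> cop \<Rightarrow> bool" where
  "lead g L s A \<longleftrightarrow> (\<exists>X. low g L s X \<and> eq_on_H0 A (\<lambda>f z. NN g L s f z + X f z))"

lemma eqH_iff: "eq_on_H0 A B \<longleftrightarrow> (\<forall>f z. H0 f \<longrightarrow> z \<in> BB \<longrightarrow> A f z = B f z)"
  unfolding eq_on_H0_def H0_def by auto

lemma eqH_trans: "eq_on_H0 A B \<Longrightarrow> eq_on_H0 B C \<Longrightarrow> eq_on_H0 A C"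
  unfolding eqH_iff by auto

lemma low_cong: "eq_on_H0 A B \<Longrightarrow> low g L s B \<Longrightarrow> low g L s A"
  unfolding low_def using eqH_trans by blast

lemma lead_cong: "eq_on_H0 A B \<Longrightarrow> lead g L s B \<Longrightarrow> lead g L s A"
  unfolding lead_def using eqH_trans by blast

lemma low_zero: "low g L s (\<lambda>f z. 0)"
  unfolding low_def eqH_iff by (rule exI[of _ "\<lambda>_. 0"]) simp

lemma low_add: "low g L s A \<Longrightarrow> low g L s B \<Longrightarrow> low g L s (\<lambda>f z. A f z + B f z)"
  unfolding low_def eqH_iff
proof (elim exE)
  fix c d assume c: "\<forall>f z. H0 f \<longrightarrow> z \<in> BB \<longrightarrow> A f z = (\<Sum>i<s. c i * NN g L i f z)"
    and d: "\<forall>f z. H0 f \<longrightarrow> z \<in> BB \<longrightarrow> B f z = (\<Sum>i<s. d i * NN g L i f z)"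
  show "\<exists>e. \<forall>f z. H0 f \<longrightarrow> z \<in> BB \<longrightarrow> A f z + B f z = (\<Sum>i<s. e i * NN g L i f z)"
    by (rule exI[of _ "\<lambda>i. c i + d i"]) (simp add: c d distrib_right sum.distrib)
qed

lemma low_smult: "low g L s A \<Longrightarrow> low g L s (\<lambda>f z. k * A f z)"
  unfolding low_def eqH_iff
proof (elim exE)
  fix c assume c: "\<forall>f z. H0 f \<longrightarrow> z \<in> BB \<longrightarrow> A f z = (\<Sum>i<s. c i * NN g L i f z)"
  show "\<exists>e. \<forall>f z. H0 f \<longrightarrow> z \<in> BB \<longrightarrow> k * A f z = (\<Sum>i<s. e i * NN g L i f z)"
    by (rule exI[of _ "\<lambda>i. k * c i"]) (simp add: c sum_distrib_left mult.assoc)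
qed

lemma low_sum: "finite I \<Longrightarrow> (\<forall>i\<in>I. low g L s (B i)) \<Longrightarrow> low g L s (\<lambda>f z. \<Sum>i\<in>I. c i * B i f z)"
proof (induction I rule: finite_induct)
  case empty then show ?case by (simp add: low_zero)
next
  case (insert x F)
  then have "low g L s (\<lambda>f z. c x * B x f z + (\<Sum>i\<in>F. c i * B i f z))"
    by (intro low_add low_smult) auto
  then show ?case using insert by simp
qed

lemma low_mono: "low g L s A \<Longrightarrow> s \<le> s' \<Longrightarrow> low g L s' A"
  unfolding low_def eqH_iff
proof (elim exE)
  fix c assume c: "\<forall>f z. H0 f \<longrightarrow> z \<in> BB \<longrightarrow> A f z = (\<Sum>i<s. c i * NN g L i f z)" and s: "s \<le> s'"
  define c' where "c' i = (if i < s then c i else 0)" for i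
  have "(\<Sum>i<s'. c' i * NN g L i f z) = (\<Sum>i<s. c i * NN g L i f z)" for f z
  proof -
    have "(\<Sum>i<s'. c' i * NN g L i f z) = (\<Sum>i<s. c' i * NN g L i f z)"
      by (rule sum.mono_neutral_right) (use s in \<open>auto simp: c'_def\<close>)
    also have "\<dots> = (\<Sum>i<s. c i * NN g L i f z)" by (simp add: c'_def)
    finally show ?thesis .
  qed
  then show "\<exists>e. \<forall>f z. H0 f \<longrightarrow> z \<in> BB \<longrightarrow> A f z = (\<Sum>i<s'. e i * NN g L i f z)"
    using c by metis
qed

lemma low_NN: "i < s \<Longrightarrow> low g L s (NN g L i)"
  unfolding low_def eqH_iff
proof (intro exI[of _ "\<lambda>k. if k = i then 1 else 0"] allI impI)
  fix f z assume "i < s"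
  have "(\<Sum>k<s. (if k = i then 1 else 0) * NN g L k f z) = (\<Sum>k<s. if k = i then NN g L k f z else 0)"
    by (rule sum.cong) auto
  also have "\<dots> = NN g L i f z" using \<open>i < s\<close> by (simp add: sum.delta)
  finally show "NN g L i f z = (\<Sum>k<s. (if k = i then 1 else 0) * NN g L k f z)" by simp
qed

lemma lead_low: "lead g L s A \<Longrightarrow> low g L (Suc s) A"
  unfolding lead_def
proof (elim exE conjE)
  fix X assume X: "low g L s X" and A: "eq_on_H0 A (\<lambda>f z. NN g L s f z + X f z)"
  have "low g L (Suc s) (\<lambda>f z. NN g L s f z + X f z)"
    by (intro low_add low_NN low_mono[OF X]) auto
  then show "low g L (Suc s) A" using low_cong[OF A] by blast
qed

lemma lead_add_low: "lead g L s A \<Longrightarrow> low g L s Y \<Longrightarrow> lead g L s (\<lambda>f z. A f z + Y f z)"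
  unfolding lead_def
proof (elim exE conjE)
  fix X assume X: "low g L s X" and A: "eq_on_H0 A (\<lambda>f z. NN g L s f z + X f z)" and Y: "low g L s Y"
  show "\<exists>X. low g L s X \<and> eq_on_H0 (\<lambda>f z. A f z + Y f z) (\<lambda>f z. NN g L s f z + X f z)"
    by (rule exI[of _ "\<lambda>f z. X f z + Y f z"]) (use A X Y low_add in \<open>auto simp: eqH_iff\<close>)
qed

context
  fixes g :: cfun
  assumes g: "g holomorphic_on BB"
begin

lemma H0_S: "H0 f \<Longrightarrow> H0 (Sop g f)"
  unfolding H0_def using S_hol[OF g, of f] by (simp add: S_0[OF g])
lemma H0_T: "H0 f \<Longrightarrow> H0 (Top g f)"
  unfolding H0_def using T_hol[OF g, of f] by (simp add: T_0[OF g])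
lemma H0_Sp: "H0 f \<Longrightarrow> H0 ((Sop g ^^ k) f)"
proof (induction k)
  case (Suc k) then show ?case using H0_S by simp
qed simp
lemma H0_Tp: "H0 f \<Longrightarrow> H0 ((Top g ^^ k) f)"
proof (induction k)
  case (Suc k) then show ?case using H0_T by simp
qed simp
lemma H0_NN: "H0 f \<Longrightarrow> H0 (NN g L i f)"
  unfolding NN_def comp_def by (intro H0_Sp H0_Tp)
lemma hol_NN: "H0 f \<Longrightarrow> NN g L i f holomorphic_on BB"
  using H0_NN unfolding H0_def by blast

lemma P_comp_sum:
  assumes P: "goodop P" and X: "eq_on_H0 X (\<lambda>f z. \<Sum>i<s. c i * NN g L i f z)"
  shows "eq_on_H0 (P \<circ> X) (\<lambda>f z. \<Sum>i<s. c i * P (NN g L i f) z)"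
  unfolding eqH_iff
proof (intro allI impI)
  fix f z assume f: "H0 f" and z: "z \<in> BB"
  have "(P \<circ> X) f z = P (\<lambda>w. \<Sum>i<s. c i * NN g L i f w) z"
    unfolding comp_def
    by (rule goodop_cong[OF P _ z]) (use X f in \<open>simp add: eqH_iff\<close>)
  also have "\<dots> = (\<Sum>i<s. c i * P (NN g L i f) z)"
    by (rule goodop_sum[OF P]) (use hol_NN f z in auto)
  finally show "(P \<circ> X) f z = (\<Sum>i<s. c i * P (NN g L i f) z)" .
qed

lemma P_comp_lead:
  assumes P: "goodop P" and A: "eq_on_H0 A (\<lambda>f z. NN g L s f z + X f z)"
    and X: "eq_on_H0 X (\<lambda>f z. \<Sum>i<s. c i * NN g L i f z)"
  shows "eq_on_H0 (P \<circ> A) (\<lambda>f z. P (NN g L s f) z + (P \<circ> X) f z)"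
  unfolding eqH_iff
proof (intro allI impI)
  fix f z assume f: "H0 f" and z: "z \<in> BB"
  have hs: "(\<lambda>w. \<Sum>i<s. c i * NN g L i f w) holomorphic_on BB"
    using hol_NN[OF f] by (auto intro!: holomorphic_intros)
  have "(P \<circ> A) f z = P (\<lambda>w. NN g L s f w + (\<lambda>w. \<Sum>i<s. c i * NN g L i f w) w) z"
    unfolding comp_def
    by (rule goodop_cong[OF P _ z]) (use A X f in \<open>simp add: eqH_iff\<close>)
  also have "\<dots> = P (NN g L s f) z + P (\<lambda>w. \<Sum>i<s. c i * NN g L i f w) z"
    by (rule goodop_add[OF P hol_NN[OF f] hs z])
  also have "P (\<lambda>w. \<Sum>i<s. c i * NN g L i f w) z = (P \<circ> X) f z"
    unfolding comp_def
    by (rule goodop_cong[OF P _ z]) (use X f in \<open>simp add: eqH_iff\<close>)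
  finally show "(P \<circ> A) f z = P (NN g L s f) z + (P \<circ> X) f z" .
qed

lemma S_NN: "Sop g (NN g L i f) = NN g (Suc L) (Suc i) f"
  by (simp add: NN_def)

lemma S_low: "low g L s X \<Longrightarrow> low g (Suc L) (Suc s) (Sop g \<circ> X)"
proof -
  assume "low g L s X"
  then obtain c where c: "eq_on_H0 X (\<lambda>f z. \<Sum>i<s. c i * NN g L i f z)" unfolding low_def by blast
  have e: "eq_on_H0 (Sop g \<circ> X) (\<lambda>f z. \<Sum>i<s. c i * NN g (Suc L) (Suc i) f z)"
    using P_comp_sum[OF goodop_S[OF g] c] by (simp add: S_NN)
  define c' where "c' i = (if i = 0 then 0 else c (i - 1))" for i
  have "(\<Sum>i<Suc s. c' i * NN g (Suc L) i f z) = (\<Sum>i<s. c i * NN g (Suc L) (Suc i) f z)" for f z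
  proof -
    have "(\<Sum>i<Suc s. c' i * NN g (Suc L) i f z) = c' 0 * NN g (Suc L) 0 f z + (\<Sum>i<s. c' (Suc i) * NN g (Suc L) (Suc i) f z)"
      by (rule sum.lessThan_Suc_shift)
    also have "\<dots> = (\<Sum>i<s. c i * NN g (Suc L) (Suc i) f z)" by (simp add: c'_def)
    finally show ?thesis .
  qed
  then show ?thesis using e unfolding low_def by (intro exI[of _ c']) simp
qed

lemma S_lead: "lead g L s A \<Longrightarrow> lead g (Suc L) (Suc s) (Sop g \<circ> A)"
proof -
  assume "lead g L s A"
  then obtain X c where A: "eq_on_H0 A (\<lambda>f z. NN g L s f z + X f z)"
    and X: "eq_on_H0 X (\<lambda>f z. \<Sum>i<s. c i * NN g L i f z)" and Xl: "low g L s X"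
    unfolding lead_def low_def by blast
  have "eq_on_H0 (Sop g \<circ> A) (\<lambda>f z. NN g (Suc L) (Suc s) f z + (Sop g \<circ> X) f z)"
    using P_comp_lead[OF goodop_S[OF g] A X] by (simp add: S_NN)
  then show ?thesis unfolding lead_def using S_low[OF Xl] by blast
qed

lemma T_low_gen:
  assumes TN: "\<forall>i<s. lead g (Suc L) i (Top g \<circ> NN g L i)" and X: "low g L s X"
  shows "low g (Suc L) s (Top g \<circ> X)"
proof -
  obtain c where c: "eq_on_H0 X (\<lambda>f z. \<Sum>i<s. c i * NN g L i f z)" using X unfolding low_def by blast
  have e: "eq_on_H0 (Top g \<circ> X) (\<lambda>f z. \<Sum>i\<in>{..<s}. c i * (Top g \<circ> NN g L i) f z)"
    using P_comp_sum[OF goodop_T[OF g] c] by simp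
  have "low g (Suc L) s (\<lambda>f z. \<Sum>i\<in>{..<s}. c i * (Top g \<circ> NN g L i) f z)"
  proof (rule low_sum)
    show "\<forall>i\<in>{..<s}. low g (Suc L) s (Top g \<circ> NN g L i)"
      using TN lead_low low_mono by (metis Suc_leI lessThan_iff)
  qed simp
  then show ?thesis using low_cong[OF e] by blast
qed

lemma T_lead_gen:
  assumes TN: "\<forall>i\<le>s. lead g (Suc L) i (Top g \<circ> NN g L i)" and A0: "lead g L s A"
  shows "lead g (Suc L) s (Top g \<circ> A)"
proof -
  obtain X c where A: "eq_on_H0 A (\<lambda>f z. NN g L s f z + X f z)"
    and X: "eq_on_H0 X (\<lambda>f z. \<Sum>i<s. c i * NN g L i f z)" and Xl: "low g L s X"
    using A0 unfolding lead_def low_def by blast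
  have e1: "eq_on_H0 (Top g \<circ> A) (\<lambda>f z. (Top g \<circ> NN g L s) f z + (Top g \<circ> X) f z)"
    using P_comp_lead[OF goodop_T[OF g] A X] by simp
  have l1: "lead g (Suc L) s (Top g \<circ> NN g L s)" using TN by simp
  have l2: "low g (Suc L) s (Top g \<circ> X)"
    by (rule T_low_gen[OF _ Xl]) (use TN in auto)
  have "lead g (Suc L) s (\<lambda>f z. (Top g \<circ> NN g L s) f z + (Top g \<circ> X) f z)"
    by (rule lead_add_low[OF l1 l2])
  then show ?thesis using lead_cong[OF e1] by blast
qed

lemma TN: "i \<le> L \<Longrightarrow> lead g (Suc L) i (Top g \<circ> NN g L i)"
proof (induction i arbitrary: L rule: less_induct)
  case (less i)
  show ?case
  proof (cases i)
    case 0
    have "eq_on_H0 (Top g \<circ> NN g L 0) (\<lambda>f z. NN g (Suc L) 0 f z + 0)"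
      unfolding eqH_iff NN_def by simp
    then show ?thesis using 0 low_zero unfolding lead_def by blast
  next
    case (Suc k)
    then obtain L' where L: "L = Suc L'" and k: "k \<le> L'" using less.prems by (cases L) auto
    have IHk: "lead g (Suc L') k (Top g \<circ> NN g L' k)" by (rule less.IH) (use Suc k in auto)
    have l1: "lead g (Suc (Suc L')) (Suc k) (Sop g \<circ> (Top g \<circ> NN g L' k))"
      by (rule S_lead[OF IHk])
    have l2: "low g (Suc (Suc L')) (Suc k) (Top g \<circ> (Top g \<circ> NN g L' k))"
    proof (rule T_low_gen)
      show "\<forall>j<Suc k. lead g (Suc (Suc L')) j (Top g \<circ> NN g (Suc L') j)"
      proof (intro allI impI)
        fix j assume "j < Suc k"
        then show "lead g (Suc (Suc L')) j (Top g \<circ> NN g (Suc L') j)"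
          by (intro less.IH) (use Suc k in auto)
      qed
      show "low g (Suc L') (Suc k) (Top g \<circ> NN g L' k)" by (rule lead_low[OF IHk])
    qed
    have l3: "lead g (Suc (Suc L')) (Suc k) (\<lambda>f z. (Sop g \<circ> (Top g \<circ> NN g L' k)) f z
                 + (-1) * (Top g \<circ> (Top g \<circ> NN g L' k)) f z)"
      by (rule lead_add_low[OF l1 low_smult[OF l2]])
    have e: "eq_on_H0 (Top g \<circ> NN g (Suc L') (Suc k)) (\<lambda>f z. (Sop g \<circ> (Top g \<circ> NN g L' k)) f z
                 + (-1) * (Top g \<circ> (Top g \<circ> NN g L' k)) f z)"
      unfolding eqH_iff
    proof (intro allI impI)
      fix f z assume f: "H0 f" and z: "z \<in> BB"
      have "H0 (NN g L' k f)" by (rule H0_NN[OF f])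
      then have "Top g (Sop g (NN g L' k f)) z = Sop g (Top g (NN g L' k f)) z - Top g (Top g (NN g L' k f)) z"
        using key[OF g _ _ z] unfolding H0_def by blast
      then show "(Top g \<circ> NN g (Suc L') (Suc k)) f z = (Sop g \<circ> (Top g \<circ> NN g L' k)) f z
                 + (-1) * (Top g \<circ> (Top g \<circ> NN g L' k)) f z"
        by (simp add: S_NN[symmetric])
    qed
    show ?thesis using lead_cong[OF e l3] unfolding L Suc .
  qed
qed

lemma T_lead: "s \<le> L \<Longrightarrow> lead g L s A \<Longrightarrow> lead g (Suc L) s (Top g \<circ> A)"
  by (rule T_lead_gen) (auto intro: TN)

lemma word_op_Cons: "word_op g (l # w) = letter_op g l \<circ> word_op g w"
  by (simp add: word_op_def)

lemma lead_word: "set w \<subseteq> {LS, LT} \<Longrightarrow> lead g (length w) (count_list w LS) (word_op g w)"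
proof (induction w)
  case Nil
  have "eq_on_H0 (word_op g []) (\<lambda>f z. NN g 0 0 f z + 0)"
    unfolding eqH_iff NN_def word_op_def by simp
  then show ?case using low_zero unfolding lead_def by fastforce
next
  case (Cons l w)
  then have IH: "lead g (length w) (count_list w LS) (word_op g w)" by simp
  from Cons.prems have "l = LS \<or> l = LT" by simp
  then show ?case
  proof
    assume l: "l = LS"
    have e: "word_op g (l # w) = Sop g \<circ> word_op g w" by (simp add: word_op_Cons l)
    have "length (l#w) = Suc (length w)" "count_list (l#w) LS = Suc (count_list w LS)" by (simp_all add: l)
    then show ?case unfolding e by (simp only:) (rule S_lead[OF IH])
  next
    assume l: "l = LT"
    have e: "word_op g (l # w) = Top g \<circ> word_op g w" by (simp add: word_op_Cons l)
    have "length (l#w) = Suc (length w)" "count_list (l#w) LS = count_list w LS" by (simp_all add: l)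
    then show ?case unfolding e by (simp only:) (rule T_lead[OF count_le_length IH])
  qed
qed

end




lemma tri:
  "(\<forall>i<s. lead g L i (B i)) \<Longrightarrow> low g L s Z \<Longrightarrow> \<exists>a. eq_on_H0 Z (\<lambda>f z. \<Sum>i<s. a i * B i f z)"
proof (induction s arbitrary: Z)
  case 0
  then show ?case unfolding low_def by simp
next
  case (Suc s)
  obtain c where c: "eq_on_H0 Z (\<lambda>f z. \<Sum>i<Suc s. c i * NN g L i f z)" using Suc.prems(2) unfolding low_def by blast
  have "lead g L s (B s)" using Suc.prems(1) by simp
  then obtain X where X: "low g L s X" and Bs: "eq_on_H0 (B s) (\<lambda>f z. NN g L s f z + X f z)"
    unfolding lead_def by blast
  have l0: "low g L s (\<lambda>f z. \<Sum>i<s. c i * NN g L i f z)" unfolding low_def eqH_iff by blast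
  have l1: "low g L s (\<lambda>f z. (\<Sum>i<s. c i * NN g L i f z) + (- c s) * X f z)"
    by (rule low_add[OF l0 low_smult[OF X]])
  have e1: "eq_on_H0 (\<lambda>f z. Z f z - c s * B s f z) (\<lambda>f z. (\<Sum>i<s. c i * NN g L i f z) + (- c s) * X f z)"
    using c Bs unfolding eqH_iff by (simp add: algebra_simps)
  have "low g L s (\<lambda>f z. Z f z - c s * B s f z)" by (rule low_cong[OF e1 l1])
  moreover have "\<forall>i<s. lead g L i (B i)" using Suc.prems(1) by simp
  ultimately obtain a where a: "eq_on_H0 (\<lambda>f z. Z f z - c s * B s f z) (\<lambda>f z. \<Sum>i<s. a i * B i f z)"
    using Suc.IH by blast
  show ?case
  proof (rule exI[of _ "a(s := c s)"])
    show "eq_on_H0 Z (\<lambda>f z. \<Sum>i<Suc s. (a(s := c s)) i * B i f z)"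
      unfolding eqH_iff
    proof (intro allI impI)
      fix f z assume f: "H0 f" and z: "z \<in> BB"
      have "(\<Sum>i<Suc s. (a(s := c s)) i * B i f z) = (\<Sum>i<s. (a(s := c s)) i * B i f z) + c s * B s f z"
        by simp
      also have "(\<Sum>i<s. (a(s := c s)) i * B i f z) = (\<Sum>i<s. a i * B i f z)"
        by (rule sum.cong) auto
      also have "\<dots> = Z f z - c s * B s f z" using a f z unfolding eqH_iff by simp
      finally show "Z f z = (\<Sum>i<Suc s. (a(s := c s)) i * B i f z)" by simp
    qed
  qed
qed

lemma length_word: "set w \<subseteq> {LS, LT} \<Longrightarrow> length w = count_list w LS + count_list w LT"
  by (induction w) auto

lemma Wg_lead: "g holomorphic_on BB \<Longrightarrow> K \<in> Wg g a b \<Longrightarrow> lead g (a + b) a K"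
proof -
  assume g: "g holomorphic_on BB" and "K \<in> Wg g a b"
  then obtain w where w: "K = word_op g w" "set w \<subseteq> {LS, LT}" "count_list w LS = a" "count_list w LT = b"
    unfolding Wg_def by blast
  have "length w = a + b" using length_word[OF w(2)] w by simp
  then show ?thesis using lead_word[OF g w(2)] w by simp
qed

lemma opspan_low:
  assumes "\<forall>K\<in>A. low g L s K" "M \<in> opspan A"
  shows "low g L s M"
proof -
  obtain cs where cs: "set (map snd cs) \<subseteq> A"
    and M: "M = (\<lambda>f z. sum_list (map (\<lambda>(c, K). c * K f z) cs))"
    using assms(2) unfolding opspan_def by blast
  have "low g L s (\<lambda>f z. sum_list (map (\<lambda>(c, K). c * K f z) cs))" using cs
  proof (induction cs)
    case Nil then show ?case by (simp add: low_zero)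
  next
    case (Cons p cs)
    obtain c K where p: "p = (c, K)" by fastforce
    have "low g L s (\<lambda>f z. c * K f z + sum_list (map (\<lambda>(c, K). c * K f z) cs))"
      using Cons assms(1) p by (intro low_add low_smult) auto
    then show ?case using p by simp
  qed
  then show ?thesis using M by simp
qed

lemma word_op_Nil: "word_op g [] = id" by (simp add: word_op_def)
lemma wCons: "word_op g (l # w) = letter_op g l \<circ> word_op g w" by (simp add: word_op_def)

lemma word_op_append: "word_op g (u @ v) = word_op g u \<circ> word_op g v"
  by (induction u) (simp_all only: append.simps word_op_Nil wCons id_comp comp_assoc)

lemma word_op_repS: "word_op g (replicate k LS) = Sop g ^^ k"
  by (induction k) (simp_all only: replicate.simps word_op_Nil wCons letter_op.simps funpow.simps)

lemma word_op_pow: "word_op g (concat (replicate k u)) = word_op g u ^^ k"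
  by (induction k) (simp_all only: replicate.simps concat.simps word_op_Nil word_op_append funpow.simps)

lemma word_op_T: "word_op g [LT] = Top g"
  by (simp only: word_op_Nil wCons letter_op.simps comp_id)

lemma count_concat_rep: "count_list (concat (replicate k u)) x = k * count_list u x"
  by (induction k) auto

lemma count_rep: "count_list (replicate k y) x = (if y = x then k else 0)"
  by (induction k) auto

lemma calL_word:
  assumes n: "n \<ge> 1"
  shows "\<exists>w. calL g m n j = word_op g w \<and> set w \<subseteq> {LS, LT} \<and>
      count_list w LS = m - j \<and> count_list w LT = n + j"
proof -
  define q where "q = qq m n j"
  define d where "d = dd m n j"
  have dlt: "d < n + j" unfolding d_def dd_def using n by simp
  have qd: "(n + j) * q + d = m - j" unfolding q_def d_def qq_def dd_def
    by (metis mult.commute div_mult_mod_eq)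
  define u1 where "u1 = replicate (Suc q) LS @ [LT]"
  define u2 where "u2 = replicate q LS @ [LT]"
  define w where "w = concat (replicate d u1) @ concat (replicate (n + j - d) u2)"
  have "calL g m n j = word_op g w"
    unfolding w_def calL_def word_op_append word_op_pow u1_def u2_def word_op_repS word_op_T
    by (simp add: q_def d_def)
  moreover have "set w \<subseteq> {LS, LT}" unfolding w_def u1_def u2_def by auto
  moreover have "count_list w LS = m - j"
  proof -
    have "count_list w LS = d * Suc q + (n + j - d) * q"
      unfolding w_def u1_def u2_def by (simp add: count_concat_rep count_rep)
    also have "\<dots> = d + (d + (n + j - d)) * q" by (simp add: algebra_simps)
    also have "d + (n + j - d) = n + j" using dlt by simp
    finally have "count_list w LS = d + (n + j) * q" .
    then show ?thesis using qd by simp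
  qed
  moreover have "count_list w LT = n + j"
    unfolding w_def u1_def u2_def using dlt by (simp add: count_concat_rep count_rep)
  ultimately show ?thesis by blast
qed

lemma calL_lead:
  assumes g: "g holomorphic_on BB" and n: "n \<ge> 1" and j: "j \<le> m"
  shows "lead g (m + n) (m - j) (calL g m n j)"
proof -
  obtain w where w: "calL g m n j = word_op g w" "set w \<subseteq> {LS, LT}"
      "count_list w LS = m - j" "count_list w LT = n + j"
    using calL_word[OF n] by blast
  have "length w = m + n" using length_word[OF w(2)] w(3,4) j by simp
  then show ?thesis using lead_word[OF g w(2)] w by simp
qed




lemma qq_pos: "n dvd m \<Longrightarrow> m \<ge> 1 \<Longrightarrow> n \<ge> 1 \<Longrightarrow> qq m n 0 \<ge> 1"
  unfolding qq_def by (auto elim!: dvdE)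

lemma qq_lt:
  assumes "n dvd m" "n \<ge> 1" "1 \<le> j" "j \<le> m"
  shows "qq m n j < qq m n 0"
proof (rule ccontr)
  obtain q0 where m: "m = n * q0" using assms(1) by (auto elim!: dvdE)
  have q0: "qq m n 0 = q0" unfolding qq_def m using assms(2) by simp
  define q where "q = qq m n j"
  assume "\<not> qq m n j < qq m n 0"
  then have "q0 \<le> q" using q0 q_def by simp
  have "(n + j) * q \<le> m - j" unfolding q_def qq_def by (rule times_div_less_eq_dividend)
  moreover have "(n + j) * q0 \<le> (n + j) * q" using \<open>q0 \<le> q\<close> by simp
  moreover have "n * q0 \<le> (n + j) * q0" by simp
  ultimately have "n * q0 \<le> m - j" by linarith
  then show False using m assms(3,4) by linarith
qed

lemma dd_prop:
  assumes "n dvd m" "n \<ge> 1" "1 \<le> j" "j \<le> m" "qq m n j = qq m n 0 - 1" "m \<ge> 1"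
  shows "0 \<le> int n - int j * int (qq m n 0) \<and>
            int (dd m n j) = int n - int j * int (qq m n 0) \<and> dd m n j < n"
proof -
  obtain q0 where m: "m = n * q0" using assms(1) by (auto elim!: dvdE)
  have q0: "qq m n 0 = q0" unfolding qq_def m using assms(2) by simp
  have q0p: "q0 \<ge> 1" using qq_pos[OF assms(1,6,2)] q0 by simp
  then obtain p where p: "q0 = Suc p" by (cases q0) auto
  have "(m - j) div (n + j) * (n + j) + (m - j) mod (n + j) = m - j" by (rule div_mult_mod_eq)
  then have e: "p * (n + j) + dd m n j = m - j"
    using assms(5) q0 p unfolding qq_def dd_def by simp
  have ei: "int p * (int n + int j) + int (dd m n j) = int n * (int p + 1) - int j"
    using e m p assms(4) by (metis (no_types) add.commute int_ops(5) int_ops(7) of_nat_Suc of_nat_add of_nat_diff of_nat_mult mult.commute)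
  have d: "int (dd m n j) = int n - int j * (int p + 1)" using ei by (simp add: algebra_simps)
  have "1 * 1 \<le> int j * (int p + 1)" by (rule mult_mono) (use assms(3) in auto)
  then have X: "1 \<le> int j * (int p + 1)" by simp
  have qi: "int (qq m n 0) = int p + 1" using q0 p by simp
  have A: "0 \<le> int n - int j * int (qq m n 0)" using d qi by (metis of_nat_0_le_iff)
  have B: "int (dd m n j) = int n - int j * int (qq m n 0)" using d qi by simp
  have "int (dd m n j) < int n" using d X by linarith
  then have C: "dd m n j < n" by simp
  show ?thesis using A B C by blast
qed

theorem corollary2p2:
  fixes m n :: nat and g :: cfun and Lg L0 :: cop and Lj :: "nat \<Rightarrow> cop"
  assumes "m \<ge> 1" and "n \<ge> 1"
    and "g holomorphic_on ball 0 1"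
    and "g_operator g Lg"
    and "L0 \<in> Wg g m n"
    and "\<forall>j\<in>{1..m}. Lj j \<in> opspan (Wg g (m - j) (n + j))"
    and "eq_on_H0 Lg (\<lambda>f z. L0 f z + (\<Sum>j=1..m. Lj j f z))"
  shows "(\<exists>a :: nat \<Rightarrow> complex.
            eq_on_H0 Lg (\<lambda>f z. calL g m n 0 f z + (\<Sum>j=1..m. a j * calL g m n j f z)))
       \<and> (n dvd m \<longrightarrow>
            qq m n 0 \<ge> 1 \<and> (\<forall>j\<in>{1..m}. qq m n j < qq m n 0) \<and>
            (\<exists>c :: nat \<Rightarrow> complex.
               eq_on_H0 Lg (\<lambda>f z. (((Sop g ^^ qq m n 0) \<circ> Top g) ^^ n) f z
                 + (\<Sum>j\<in>{j\<in>{1..m}. qq m n j = qq m n 0 - 1}. c j * calL g m n j f z)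
                 + (\<Sum>j\<in>{j\<in>{1..m}. qq m n j < qq m n 0 - 1}. c j * calL g m n j f z))))
       \<and> (\<forall>j\<in>{1..m}. n dvd m \<and> qq m n j = qq m n 0 - 1 \<longrightarrow>
            0 \<le> int n - int j * int (qq m n 0) \<and>
            int (dd m n j) = int n - int j * int (qq m n 0) \<and> dd m n j < n)"
proof -
  note g = assms(3)
  have m1: "m \<ge> 1" and n1: "n \<ge> 1" using assms by auto
  have EX: "\<exists>a :: nat \<Rightarrow> complex.
            eq_on_H0 Lg (\<lambda>f z. calL g m n 0 f z + (\<Sum>j=1..m. a j * calL g m n j f z))"
  proof -
    have "lead g (m + n) m L0" using Wg_lead[OF g assms(5)] .
    then obtain X0 where X0: "low g (m + n) m X0" and L0: "eq_on_H0 L0 (\<lambda>f z. NN g (m + n) m f z + X0 f z)"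
      unfolding lead_def by blast
    have Ljl: "low g (m + n) m (Lj j)" if j: "j \<in> {1..m}" for j
    proof -
      have "\<forall>K\<in>Wg g (m - j) (n + j). low g (m + n) m K"
      proof
        fix K assume "K \<in> Wg g (m - j) (n + j)"
        then have "lead g (m - j + (n + j)) (m - j) K" by (rule Wg_lead[OF g])
        then have "low g (m + n) (Suc (m - j)) K" using j by (auto dest: lead_low)
        then show "low g (m + n) m K" by (rule low_mono) (use j in auto)
      qed
      then show ?thesis using opspan_low assms(6) j by blast
    qed
    have Sl: "low g (m + n) m (\<lambda>f z. \<Sum>j\<in>{1..m}. 1 * Lj j f z)"
      by (rule low_sum) (use Ljl in auto)
    have "lead g (m + n) (m - 0) (calL g m n 0)" by (rule calL_lead[OF g n1]) simp
    then obtain Y where Y: "low g (m + n) m Y" and C0: "eq_on_H0 (calL g m n 0) (\<lambda>f z. NN g (m + n) m f z + Y f z)"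
      unfolding lead_def by auto
    define Z where "Z = (\<lambda>f z. X0 f z + (\<Sum>j\<in>{1..m}. 1 * Lj j f z) + (-1) * Y f z)"
    have Zl: "low g (m + n) m Z" unfolding Z_def
      by (intro low_add low_smult X0 Y Sl)
    have LZ: "eq_on_H0 Lg (\<lambda>f z. calL g m n 0 f z + Z f z)"
      using assms(7) L0 C0 unfolding eqH_iff Z_def by auto
    have "\<forall>i<m. lead g (m + n) i (calL g m n (m - i))"
    proof (intro allI impI)
      fix i assume "i < m"
      have "lead g (m + n) (m - (m - i)) (calL g m n (m - i))" by (rule calL_lead[OF g n1]) simp
      then show "lead g (m + n) i (calL g m n (m - i))" using \<open>i < m\<close> by simp
    qed
    from tri[OF this Zl] obtain a where a: "eq_on_H0 Z (\<lambda>f z. \<Sum>i<m. a i * calL g m n (m - i) f z)"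
      by blast
    have re: "(\<Sum>i<m. a i * calL g m n (m - i) f z) = (\<Sum>j=1..m. a (m - j) * calL g m n j f z)" for f z
      by (rule sum.reindex_bij_witness[where i="\<lambda>j. m - j" and j="\<lambda>i. m - i"]) auto
    have "eq_on_H0 Lg (\<lambda>f z. calL g m n 0 f z + (\<Sum>j=1..m. a (m - j) * calL g m n j f z))"
      using LZ a re unfolding eqH_iff by simp
    then show ?thesis by (rule exI[of _ "\<lambda>j. a (m - j)"])
  qed
  have P2: "n dvd m \<longrightarrow>
            qq m n 0 \<ge> 1 \<and> (\<forall>j\<in>{1..m}. qq m n j < qq m n 0) \<and>
            (\<exists>c :: nat \<Rightarrow> complex.
               eq_on_H0 Lg (\<lambda>f z. (((Sop g ^^ qq m n 0) \<circ> Top g) ^^ n) f z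
                 + (\<Sum>j\<in>{j\<in>{1..m}. qq m n j = qq m n 0 - 1}. c j * calL g m n j f z)
                 + (\<Sum>j\<in>{j\<in>{1..m}. qq m n j < qq m n 0 - 1}. c j * calL g m n j f z)))"
  proof
    assume dvd: "n dvd m"
    have lt: "\<forall>j\<in>{1..m}. qq m n j < qq m n 0" using qq_lt[OF dvd n1] by auto
    obtain a where a: "eq_on_H0 Lg (\<lambda>f z. calL g m n 0 f z + (\<Sum>j=1..m. a j * calL g m n j f z))"
      using EX by blast
    have d0: "dd m n 0 = 0" using dvd unfolding dd_def by simp
    have c0: "calL g m n 0 = (((Sop g ^^ qq m n 0) \<circ> Top g) ^^ n)"
      unfolding calL_def d0 by simp
    have split: "(\<Sum>j=1..m. a j * calL g m n j f z) =
        (\<Sum>j\<in>{j\<in>{1..m}. qq m n j = qq m n 0 - 1}. a j * calL g m n j f z)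
      + (\<Sum>j\<in>{j\<in>{1..m}. qq m n j < qq m n 0 - 1}. a j * calL g m n j f z)" for f z
    proof -
      have U: "{1..m} = {j\<in>{1..m}. qq m n j = qq m n 0 - 1} \<union> {j\<in>{1..m}. qq m n j < qq m n 0 - 1}"
        using lt by fastforce
      show ?thesis by (subst U, rule sum.union_disjoint) auto
    qed
    have "eq_on_H0 Lg (\<lambda>f z. (((Sop g ^^ qq m n 0) \<circ> Top g) ^^ n) f z
                 + (\<Sum>j\<in>{j\<in>{1..m}. qq m n j = qq m n 0 - 1}. a j * calL g m n j f z)
                 + (\<Sum>j\<in>{j\<in>{1..m}. qq m n j < qq m n 0 - 1}. a j * calL g m n j f z))"
      using a unfolding eqH_iff c0 split by (simp add: add.assoc)
    then show "qq m n 0 \<ge> 1 \<and> (\<forall>j\<in>{1..m}. qq m n j < qq m n 0) \<and>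
            (\<exists>c :: nat \<Rightarrow> complex.
               eq_on_H0 Lg (\<lambda>f z. (((Sop g ^^ qq m n 0) \<circ> Top g) ^^ n) f z
                 + (\<Sum>j\<in>{j\<in>{1..m}. qq m n j = qq m n 0 - 1}. c j * calL g m n j f z)
                 + (\<Sum>j\<in>{j\<in>{1..m}. qq m n j < qq m n 0 - 1}. c j * calL g m n j f z)))"
      using qq_pos[OF dvd m1 n1] lt by blast
  qed
  have P3: "\<forall>j\<in>{1..m}. n dvd m \<and> qq m n j = qq m n 0 - 1 \<longrightarrow>
            0 \<le> int n - int j * int (qq m n 0) \<and>
            int (dd m n j) = int n - int j * int (qq m n 0) \<and> dd m n j < n"
    using dd_prop n1 m1 by auto
  show ?thesis using EX P2 P3 by blast
qed


end
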